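(* Consider Algorithm 3 (described in the context) under the Standing Assumption, Matrix Assumption, Gradient Assumption and the event $E_{\tau,small}$ assumption of the context. Then for all $k\ge\bar k_{\tau,\xi}$, $$\mathbb{E}_{k,\tau,small}[\Delta q(x_k,\bar\tau_k,\bar g_k,H_k,\bar d_k)]\le\Delta q(x_k,\bar\tau_{\min},g_k,H_k,d_k)+\bar\tau_{\min}\zeta^{-1}M.$$
   Context: Problem: $\min_x f(x)$ s.t. $c(x)=0$, $f(x)=\mathbb{E}[F(x,\omega)]$, $c:\mathbb{R}^n\to\mathbb{R}^m$ deterministic. Notation: $g_k=\nabla f(x_k)$, $c_k=c(x_k)$, $J_k=\nabla c(x_k)^T$; $\Delta q(x,\tau,g,H,d)=-\tau(g^Td+\frac12\max\{d^THd,0\})+\|c(x)\|_1$. Standing Assumption: an open convex set $\mathcal X$ contains all iterates; $f$ is $C^1$, bounded below on $\mathcal X$, $\nabla f$ bounded and $L$-Lipschitz on $\mathcal X$; $c$, $\nabla c^T$ bounded on $\mathcal X$; $\nabla c_i$ is $\gamma_i$-Lipschitz on $\mathcal X$; singular values of $\nabla c(x)^T$ bounded away from zero uniformly over $\mathcal X$; $\Gamma:=\sum_i\gamma_i$. Matrix Assumption: deterministic symmetric $H_k$, chosen independently of the stochastic gradients, with $\|H_k\|_2\le\kappa_H$ and $u^TH_ku\ge\zeta\|u\|_2^2$ whenever $J_ku=0$. Algorithm 3 (inputs $x_0$, $\bar\tau_{-1}>0$, $\epsilon,\sigma\in(0,1)$, $\bar\xi_{-1}>0$, $\{\beta_k\}\subset(0,1]$,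 $\theta\ge0$): at iteration $k$, obtain stochastic gradient $\bar g_k$; $(\bar d_k,\bar y_k)$ solves $H_k\bar d_k+J_k^T\bar y_k=-\bar g_k$, $J_k\bar d_k=-c_k$ (assumed $\bar d_k\neq0$). $\bar\tau_k^{trial}=\infty$ if $\bar g_k^T\bar d_k+\max\{\bar d_k^TH_k\bar d_k,0\}\le0$, else $\frac{(1-\sigma)\|c_k\|_1}{\bar g_k^T\bar d_k+\max\{\bar d_k^TH_k\bar d_k,0\}}$; $\bar\tau_k=\bar\tau_{k-1}$ if $\bar\tau_{k-1}\le\bar\tau_k^{trial}$, else $(1-\epsilon)\bar\tau_k^{trial}$. $\bar\xi_k^{trial}=\frac{\Delta q(x_k,\bar\tau_k,\bar g_k,H_k,\bar d_k)}{\bar\tau_k\|\bar d_k\|_2^2}$; $\bar\xi_k=\bar\xi_{k-1}$ if $\bar\xi_{k-1}\le\bar\xi_k^{trial}$, else $(1-\epsilon)\bar\xi_k^{trial}$. With $D_k=(\bar\tau_kL+\Gamma)\|\bar d_k\|_2^2$, $\hat a_k=\beta_k\Delta q(x_k,\bar\tau_k,\bar g_k,H_k,\bar d_k)/D_k$, $\tilde a_k=\hat a_k-4\|c_k\|_1/D_k$, project both onto $[a_k,a_k+\theta\beta_k^2]$ with $a_k=\frac{\beta_k\bar\xi_k\bar\tau_k}{\bar\tau_kL+\Gamma}$ to get $\widehat\alpha_k,\widetilde\alpha_k$; $\bar\alpha_k=\widehat\alpha_k$ if $\widehat\alpha_k<1$, $1$ if $\widetilde\alpha_k\le1\le\widehat\alpha_k$,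 $\widetilde\alpha_k$ if $\widetilde\alpha_k>1$; $x_{k+1}=x_k+\bar\alpha_k\bar d_k$. $\bar\xi_{\min}$ denotes the limit of the nonincreasing positive sequence $\{\bar\xi_k\}$. Gradient Assumption: $\mathbb{E}_k[\bar g_k]=g_k$, $\mathbb{E}_k[\|\bar g_k-g_k\|_2^2]\le M$, with $\mathbb{E}_k$ conditioned on reaching $x_k$ at iteration $k$. Deterministic counterparts: $(d_k,y_k)$ solves $H_kd_k+J_k^Ty_k=-g_k$, $J_kd_k=-c_k$; $\tau_k^{trial}=\infty$ if $g_k^Td_k+\max\{d_k^TH_kd_k,0\}\le0$, else $\frac{(1-\sigma)\|c_k\|_1}{g_k^Td_k+\max\{d_k^TH_kd_k,0\}}$. Event $E_{\tau,small}$ assumption: there exist $\bar k_{\tau,\xi}\in\mathbb{N}$ and $\bar\tau_{\min}>0$ with $\bar\tau_k=\bar\tau_{\min}\le\tau_k^{trial}$ and $\bar\xi_k=\bar\xi_{\min}$ for all $k\ge\bar k_{\tau,\xi}$; moreover for $k\ge\bar k_{\tau,\xi}$, $\mathbb{E}_{k,\tau,small}[\bar g_k]=g_k$ and $\mathbb{E}_{k,\tau,small}[\|\bar g_k-g_k\|_2^2]\le M$, where $\mathbb{E}_{k,\tau,small}$ is expectation w.r.t. $\omega$ conditioned on this event and on the algorithm having reached $x_k$ at iteration $k$. *)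

theory Defs
  imports "HOL-Analysis.Analysis" "HOL-Probability.Probability"
begin

definition l1norm :: "real^'m \<Rightarrow> real" where
  "l1norm v = (\<Sum>i\<in>UNIV. \<bar>v $ i\<bar>)"

definition delta_q ::
  "(real^'n \<Rightarrow> real^'m) \<Rightarrow> real^'n \<Rightarrow> real \<Rightarrow> real^'n \<Rightarrow> real^'n^'n \<Rightarrow> real^'n \<Rightarrow> real" where
  "delta_q c x tau g H d = - tau * (g \<bullet> d + 1/2 * max (d \<bullet> (H *v d)) 0) + l1norm (c x)"

definition tau_trial ::
  "real \<Rightarrow> real^'m \<Rightarrow> real^'n \<Rightarrow> real^'n^'n \<Rightarrow> real^'n \<Rightarrow> ereal" where
  "tau_trial sig cx g H d =
     (if g \<bullet> d + max (d \<bullet> (H *v d)) 0 \<le> 0 then \<infinity>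
      else ereal ((1 - sig) * l1norm cx / (g \<bullet> d + max (d \<bullet> (H *v d)) 0)))"

end

theory Submission
  imports Defs
begin
declare transpose_matrix_vector[simp del]
lemma inner_transpose: "(u::real^'n) \<bullet> (transpose (J::real^'n^'m) *v z) = (J *v u) \<bullet> z"
  by (metis dot_lmul_matrix inner_commute transpose_matrix_vector)
lemma inner_sym: "transpose (H::real^'n^'n) = H \<Longrightarrow> u \<bullet> (H *v v) = v \<bullet> (H *v u)"
  by (metis dot_lmul_matrix inner_commute transpose_matrix_vector)
lemma kkt_solvable:
  fixes H :: "real^'n^'n" and J :: "real^'n^'m"
  assumes curv: "\<forall>u. J *v u = 0 \<longrightarrow> \<zeta> * (norm u)\<^sup>2 \<le> u \<bullet> (H *v u)" and zp: "\<zeta> > 0"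
    and sv: "\<forall>v. s * norm v \<le> norm (transpose J *v v)" and sp: "s > 0"
  shows "\<exists>p q. H *v p + transpose J *v q = g \<and> J *v p = 0"
proof -
  define K where "K = (\<lambda>(u::real^'n,z::real^'m). (H *v u + transpose J *v z, J *v u))"
  have lin: "linear K"
    unfolding K_def
    by (rule linearI) (auto simp: matrix_vector_right_distrib matrix_vector_mult_scaleR
        vector_scalar_commute algebra_simps simp del: transpose_matrix_vector)
  have "inj K"
    unfolding linear_injective_0[OF lin]
  proof (intro allI impI)
    fix x assume "K x = 0"
    then obtain u z where x: "x = (u,z)" and e1: "H *v u + transpose J *v z = 0" and e2: "J *v u = 0"
      unfolding K_def by (cases x) (auto simp: zero_prod_def)
    have "u \<bullet> (H *v u + transpose J *v z) = 0" using e1 by simp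
    hence "u \<bullet> (H *v u) = 0" using e2 by (simp add: inner_add_right inner_transpose)
    hence "\<zeta> * (norm u)\<^sup>2 \<le> 0" using curv e2 by metis
    hence u0: "u = 0" using zp by (simp add: mult_le_0_iff)
    hence "transpose J *v z = 0" using e1 by simp
    hence "s * norm z \<le> 0" using sv by (metis norm_zero)
    hence "z = 0" using sp by (simp add: mult_le_0_iff)
    thus "x = 0" using x u0 by (simp add: zero_prod_def)
  qed
  hence "surj K" using lin linear_injective_imp_surjective by blast
  then obtain x where "K x = (g, 0)" by (metis surjD)
  thus ?thesis unfolding K_def by (cases x) auto
qed
lemma arith1:
  fixes A DG dg gu de eu N DHD :: real
  assumes "A \<ge> 0" "DG = dg + gu + de + eu" "DHD = A + 2 * X + Q" "X = - gu" "Q = - eu" "Q \<le> N" "Q \<ge> 0"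
  shows "DG + 1/2 * max DHD 0 \<ge> dg + 1/2 * max A 0 + de - N"
  using assms by (cases "DHD \<le> 0") (auto simp: max_def field_simps)
lemma arith2:
  fixes A DG dg gu de eu N DHD pe :: real
  assumes "\<not> A \<ge> 0" "DG = dg + gu + de + eu" "gu = - pe" "Q = - eu" "Q \<le> N" "Q \<ge> 0"
  shows "DG + 1/2 * max DHD 0 \<ge> dg + 1/2 * max A 0 + (de - pe) - N"
  using assms by (cases "DHD \<le> 0") (auto simp: max_def field_simps)
lemma pointwise:
  fixes H :: "real^'n^'n" and J :: "real^'n^'m"
  assumes Hs: "transpose H = H" and zp: "\<zeta> > 0"
    and curv: "\<forall>u. J *v u = 0 \<longrightarrow> \<zeta> * (norm u)\<^sup>2 \<le> u \<bullet> (H *v u)"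
    and det1: "H *v d + transpose J *v y = - g" and det2: "J *v d = - cx"
    and adj1: "H *v p + transpose J *v q = g" and adj2: "J *v p = 0"
    and st1: "H *v D + transpose J *v Y = - G" and st2: "J *v D = - cx"
  shows "G \<bullet> D + 1/2 * max (D \<bullet> (H *v D)) 0 \<ge> g \<bullet> d + 1/2 * max (d \<bullet> (H *v d)) 0
           + (if d \<bullet> (H *v d) \<ge> 0 then d else d - p) \<bullet> (G - g) - (norm (G - g))\<^sup>2 / \<zeta>"
proof -
  define u where "u = D - d"
  define e where "e = G - g"
  define z where "z = Y - y"
  have Ju: "J *v u = 0" unfolding u_def using det2 st2 by (simp add: matrix_vector_mult_diff_distrib)
  have Hu: "H *v u + transpose J *v z = - e"
    unfolding u_def z_def e_def using det1 st1
    by (simp add: matrix_vector_mult_diff_distrib algebra_simps)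
  have "u \<bullet> (H *v u + transpose J *v z) = - (u \<bullet> e)" using Hu by simp
  hence a: "u \<bullet> (H *v u) = - (e \<bullet> u)" using Ju by (simp add: inner_add_right inner_transpose inner_commute)
  have "u \<bullet> (H *v d + transpose J *v y) = - (u \<bullet> g)" using det1 by simp
  hence "u \<bullet> (H *v d) = - (g \<bullet> u)" using Ju by (simp add: inner_add_right inner_transpose inner_commute)
  hence b: "d \<bullet> (H *v u) = - (g \<bullet> u)" using inner_sym[OF Hs] by metis
  have "u \<bullet> (H *v p + transpose J *v q) = u \<bullet> g" using adj1 by simp
  hence c1: "u \<bullet> (H *v p) = g \<bullet> u" using Ju by (simp add: inner_add_right inner_transpose inner_commute)
  have "p \<bullet> (H *v u + transpose J *v z) = - (p \<bullet> e)" using Hu by simp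
  hence "p \<bullet> (H *v u) = - (p \<bullet> e)" using adj2 by (simp add: inner_add_right inner_transpose inner_commute)
  hence c: "g \<bullet> u = - (p \<bullet> e)" using c1 inner_sym[OF Hs] by metis
  have q1: "\<zeta> * (norm u)\<^sup>2 \<le> u \<bullet> (H *v u)" using curv Ju by blast
  have q2: "u \<bullet> (H *v u) \<le> norm e * norm u" using a
    using Cauchy_Schwarz_ineq2[of e u] by (simp add: abs_le_iff)
  have q3: "u \<bullet> (H *v u) \<le> (norm e)\<^sup>2 / \<zeta>"
  proof (cases "norm u = 0")
    case True thus ?thesis using a zp by simp
  next
    case False
    hence pos: "norm u > 0" by simp
    from q1 q2 have "\<zeta> * norm u * norm u \<le> norm e * norm u" by (simp add: power2_eq_square mult.assoc)
    hence "\<zeta> * norm u \<le> norm e" using pos by simp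
    hence "norm u \<le> norm e / \<zeta>" using zp by (simp add: field_simps)
    hence "norm e * norm u \<le> norm e * (norm e / \<zeta>)" by (rule mult_left_mono) simp
    thus ?thesis using q2 by (simp add: power2_eq_square)
  qed
  have q4: "0 \<le> u \<bullet> (H *v u)" using q1 zp by (smt (verit) mult_nonneg_nonneg zero_le_power2)
  have GD: "G = g + e" "D = d + u" unfolding e_def u_def by auto
  have i1: "G \<bullet> D = g \<bullet> d + g \<bullet> u + e \<bullet> d + e \<bullet> u" unfolding GD by (simp add: inner_add_left inner_add_right)
  have i2: "D \<bullet> (H *v D) = d \<bullet> (H *v d) + 2 * (d \<bullet> (H *v u)) + u \<bullet> (H *v u)"
    unfolding GD using inner_sym[OF Hs, of u d]
    by (simp add: matrix_vector_right_distrib inner_add_left inner_add_right)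
  show ?thesis
  proof (cases "d \<bullet> (H *v d) \<ge> 0")
    case True
    show ?thesis unfolding e_def[symmetric] using arith1[OF True i1 i2 b _ q3 q4] a True
      by (simp add: inner_commute)
  next
    case False
    show ?thesis unfolding e_def[symmetric] using arith2[OF False i1 c _ q3 q4, of "D \<bullet> (H *v D)"] a False
      by (simp add: inner_commute inner_diff_left inner_diff_right)
  qed
qed
theorem lemma3p11:
  fixes f :: "real^'n \<Rightarrow> real" and gradf :: "real^'n \<Rightarrow> real^'n"
    and c :: "real^'n \<Rightarrow> real^'m" and Jc :: "real^'n \<Rightarrow> real^'n^'m"
    and X :: "(real^'n) set" and \<gamma> :: "'m \<Rightarrow> real"
    and L \<Gamma> \<kappa>H \<zeta> \<sigma> Mv \<tau>min :: real
    and x d :: "nat \<Rightarrow> real^'n" and y :: "nat \<Rightarrow> real^'m"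
    and H :: "nat \<Rightarrow> real^'n^'n" and J :: "nat \<Rightarrow> real^'n^'m"
    and P :: "nat \<Rightarrow> 'w measure"
    and G D :: "nat \<Rightarrow> 'w \<Rightarrow> real^'n" and Y :: "nat \<Rightarrow> 'w \<Rightarrow> real^'m"
    and kbar :: nat
  assumes
    \<comment> \<open>Standing Assumption\<close>
    X_open: "open X" and X_convex: "convex X" and x_in_X: "\<forall>k. x k \<in> X"
    and f_deriv: "\<forall>z\<in>X. (f has_derivative (\<lambda>v. gradf z \<bullet> v)) (at z)"
    and gradf_cont: "continuous_on X gradf"
    and f_bdd_below: "\<exists>b. \<forall>z\<in>X. b \<le> f z"
    and gradf_bdd: "bounded (gradf ` X)"
    and gradf_lip: "\<forall>u\<in>X. \<forall>v\<in>X. norm (gradf u - gradf v) \<le> L * norm (u - v)"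
    and c_deriv: "\<forall>z\<in>X. (c has_derivative (\<lambda>v. Jc z *v v)) (at z)"
    and c_bdd: "bounded (c ` X)" and Jc_bdd: "bounded (Jc ` X)"
    and gradc_lip: "\<forall>i. \<forall>u\<in>X. \<forall>v\<in>X. norm (row i (Jc u) - row i (Jc v)) \<le> \<gamma> i * norm (u - v)"
    and Gamma_def: "\<Gamma> = (\<Sum>i\<in>UNIV. \<gamma> i)"
    and sing_vals: "\<exists>s>0. \<forall>z\<in>X. \<forall>v. s * norm v \<le> norm (transpose (Jc z) *v v)"
    \<comment> \<open>Algorithm parameter\<close>
    and sigma_range: "0 < \<sigma>" "\<sigma> < 1"
    \<comment> \<open>Matrix Assumption\<close>
    and J_def: "\<forall>k. J k = Jc (x k)"
    and H_sym: "\<forall>k. transpose (H k) = H k"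
    and H_norm: "\<forall>k. onorm (\<lambda>v. H k *v v) \<le> \<kappa>H"
    and zeta_pos: "0 < \<zeta>"
    and H_curv: "\<forall>k u. J k *v u = 0 \<longrightarrow> \<zeta> * (norm u)\<^sup>2 \<le> u \<bullet> (H k *v u)"
    \<comment> \<open>deterministic search directions\<close>
    and det_dir: "\<forall>k. H k *v d k + transpose (J k) *v y k = - gradf (x k)
                       \<and> J k *v d k = - c (x k)"
    \<comment> \<open>Event E_tau,small, conditional distribution at iteration k >= kbar\<close>
    and tau_pos: "0 < \<tau>min"
    and tau_le_trial: "\<forall>k\<ge>kbar. ereal \<tau>min \<le> tau_trial \<sigma> (c (x k)) (gradf (x k)) (H k) (d k)"
    and prob: "\<forall>k\<ge>kbar. prob_space (P k)"
    and G_meas: "\<forall>k\<ge>kbar. G k \<in> borel_measurable (P k)"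
    and G_int: "\<forall>k\<ge>kbar. integrable (P k) (G k)"
    and G_unbiased: "\<forall>k\<ge>kbar. integral\<^sup>L (P k) (G k) = gradf (x k)"
    and G_var_int: "\<forall>k\<ge>kbar. integrable (P k) (\<lambda>w. (norm (G k w - gradf (x k)))\<^sup>2)"
    and G_var: "\<forall>k\<ge>kbar. integral\<^sup>L (P k) (\<lambda>w. (norm (G k w - gradf (x k)))\<^sup>2) \<le> Mv"
    and stoch_dir: "\<forall>k\<ge>kbar. \<forall>w\<in>space (P k).
                      H k *v D k w + transpose (J k) *v Y k w = - G k w
                      \<and> J k *v D k w = - c (x k) \<and> D k w \<noteq> 0"
  shows "\<forall>k\<ge>kbar.
           integral\<^sup>L (P k) (\<lambda>w. delta_q c (x k) \<tau>min (G k w) (H k) (D k w))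
             \<le> delta_q c (x k) \<tau>min (gradf (x k)) (H k) (d k) + \<tau>min / \<zeta> * Mv"
proof (intro allI impI)
  fix k assume kk: "kbar \<le> k"
  define g where "g = gradf (x k)"
  define a0 where "a0 = delta_q c (x k) \<tau>min g (H k) (d k)"
  obtain s where sp: "s > 0" and sv0: "\<forall>z\<in>X. \<forall>v. s * norm v \<le> norm (transpose (Jc z) *v v)"
    using sing_vals by blast
  have sv: "\<forall>v. s * norm v \<le> norm (transpose (J k) *v v)" using sv0 x_in_X J_def by metis
  have curv: "\<forall>u. J k *v u = 0 \<longrightarrow> \<zeta> * (norm u)\<^sup>2 \<le> u \<bullet> (H k *v u)" using H_curv by blast
  obtain p q where pq: "H k *v p + transpose (J k) *v q = g" "J k *v p = 0"
    using kkt_solvable[OF curv zeta_pos sv sp] by blast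
  define a where "a = (if d k \<bullet> (H k *v d k) \<ge> 0 then d k else d k - p)"
  interpret P: prob_space "P k" using prob kk by blast
  have dd: "H k *v d k + transpose (J k) *v y k = - g" "J k *v d k = - c (x k)"
    using det_dir g_def by auto
  have pw: "delta_q c (x k) \<tau>min (G k w) (H k) (D k w)
      \<le> a0 - \<tau>min * (a \<bullet> (G k w - g)) + \<tau>min / \<zeta> * (norm (G k w - g))\<^sup>2"
    if w: "w \<in> space (P k)" for w
  proof -
    have st: "H k *v D k w + transpose (J k) *v Y k w = - G k w" "J k *v D k w = - c (x k)"
      using stoch_dir kk w by auto
    have ineq: "G k w \<bullet> D k w + 1/2 * max (D k w \<bullet> (H k *v D k w)) 0 \<ge> g \<bullet> d k + 1/2 * max (d k \<bullet> (H k *v d k)) 0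
           + a \<bullet> (G k w - g) - (norm (G k w - g))\<^sup>2 / \<zeta>"
      using pointwise[OF H_sym[rule_format] zeta_pos curv dd pq st] unfolding a_def .
    have "\<tau>min * (g \<bullet> d k + 1/2 * max (d k \<bullet> (H k *v d k)) 0
           + a \<bullet> (G k w - g) - (norm (G k w - g))\<^sup>2 / \<zeta>) \<le>
          \<tau>min * (G k w \<bullet> D k w + 1/2 * max (D k w \<bullet> (H k *v D k w)) 0)"
      using ineq tau_pos by (intro mult_left_mono) auto
    thus ?thesis unfolding a0_def delta_q_def by (simp add: algebra_simps)
  qed
  have l1: "l1norm (c (x k)) \<ge> 0" unfolding l1norm_def by (simp add: sum_nonneg)
  have a0nn: "a0 \<ge> 0"
  proof -
    define den where "den = g \<bullet> d k + max (d k \<bullet> (H k *v d k)) 0"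
    have tt: "ereal \<tau>min \<le> tau_trial \<sigma> (c (x k)) g (H k) (d k)" using tau_le_trial kk g_def by auto
    have "\<tau>min * (g \<bullet> d k + 1/2 * max (d k \<bullet> (H k *v d k)) 0) \<le> l1norm (c (x k))"
    proof (cases "den \<le> 0")
      case True
      hence "g \<bullet> d k + 1/2 * max (d k \<bullet> (H k *v d k)) 0 \<le> 0" unfolding den_def by simp
      hence "\<tau>min * (g \<bullet> d k + 1/2 * max (d k \<bullet> (H k *v d k)) 0) \<le> 0"
        using tau_pos by (simp add: mult_nonneg_nonpos)
      thus ?thesis using l1 by linarith
    next
      case False
      hence "\<tau>min \<le> (1 - \<sigma>) * l1norm (c (x k)) / den" using tt unfolding tau_trial_def den_def[symmetric] by simp
      hence "\<tau>min * den \<le> (1 - \<sigma>) * l1norm (c (x k))" using False by (simp add: field_simps)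
      moreover have "\<tau>min * (g \<bullet> d k + 1/2 * max (d k \<bullet> (H k *v d k)) 0) \<le> \<tau>min * den"
        unfolding den_def using tau_pos by (intro mult_left_mono) auto
      moreover have "(1 - \<sigma>) * l1norm (c (x k)) \<le> l1norm (c (x k))" using sigma_range l1 by (simp add: mult_left_le_one_le)
      ultimately show ?thesis by linarith
    qed
    thus ?thesis unfolding a0_def delta_q_def by simp
  qed
  have Mnn: "Mv \<ge> 0"
  proof -
    have "0 \<le> integral\<^sup>L (P k) (\<lambda>w. (norm (G k w - gradf (x k)))\<^sup>2)" by (rule Bochner_Integration.integral_nonneg) simp
    moreover have "integral\<^sup>L (P k) (\<lambda>w. (norm (G k w - gradf (x k)))\<^sup>2) \<le> Mv" using G_var kk by blast
    ultimately show ?thesis by linarith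
  qed
  show "integral\<^sup>L (P k) (\<lambda>w. delta_q c (x k) \<tau>min (G k w) (H k) (D k w))
             \<le> delta_q c (x k) \<tau>min (gradf (x k)) (H k) (d k) + \<tau>min / \<zeta> * Mv"
  proof (cases "integrable (P k) (\<lambda>w. delta_q c (x k) \<tau>min (G k w) (H k) (D k w))")
    case False
    hence "integral\<^sup>L (P k) (\<lambda>w. delta_q c (x k) \<tau>min (G k w) (H k) (D k w)) = 0"
      by (rule not_integrable_integral_eq)
    moreover have "0 \<le> \<tau>min / \<zeta> * Mv" using tau_pos zeta_pos Mnn by simp
    ultimately show ?thesis using a0nn unfolding a0_def g_def by linarith
  next
    case True
    have iG: "integrable (P k) (G k)" using G_int kk by blast
    have iN: "integrable (P k) (\<lambda>w. (norm (G k w - g))\<^sup>2)" using G_var_int kk g_def by blast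
    have iE: "integrable (P k) (\<lambda>w. G k w - g)" using iG by simp
    have iA: "integrable (P k) (\<lambda>w. a \<bullet> (G k w - g))" using iE by simp
    have iR: "integrable (P k) (\<lambda>w. a0 - \<tau>min * (a \<bullet> (G k w - g)) + \<tau>min / \<zeta> * (norm (G k w - g))\<^sup>2)"
      using iA iN by simp
    have eE: "integral\<^sup>L (P k) (\<lambda>w. G k w - g) = 0"
      using iG G_unbiased kk g_def by (simp add: integral_diff P.prob_space)
    have eA: "integral\<^sup>L (P k) (\<lambda>w. a \<bullet> (G k w - g)) = 0"
      using iE eE by simp
    have eN: "integral\<^sup>L (P k) (\<lambda>w. (norm (G k w - g))\<^sup>2) \<le> Mv" using G_var kk g_def by blast
    have "integral\<^sup>L (P k) (\<lambda>w. delta_q c (x k) \<tau>min (G k w) (H k) (D k w))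
        \<le> integral\<^sup>L (P k) (\<lambda>w. a0 - \<tau>min * (a \<bullet> (G k w - g)) + \<tau>min / \<zeta> * (norm (G k w - g))\<^sup>2)"
      using True iR pw by (intro integral_mono) auto
    also have "\<dots> = a0 + \<tau>min / \<zeta> * integral\<^sup>L (P k) (\<lambda>w. (norm (G k w - g))\<^sup>2)"
      using iA iN eA by (simp add: integral_add integral_diff P.prob_space)
    also have "\<dots> \<le> a0 + \<tau>min / \<zeta> * Mv"
      using eN tau_pos zeta_pos by (intro add_left_mono mult_left_mono) auto
    finally show ?thesis unfolding a0_def g_def .
  qed
qed
end
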